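(* Let $P$ be a nonempty rational polyhedron whose affine hull is $\{x:Ax=b\}$, where $A,b$ are integral. Then for every prime $p$, $P$ contains a $p$-adic point if, and only if, there does not exist a real vector $y$ such that $y^\top A$ is integral and $y^\top b$ is not a $p$-adic rational.
   Context: A $p$-adic rational is a number $a/p^k$ with $a,k\in\mathbb{Z}$, $k\ge0$; a vector is $p$-adic if all entries are $p$-adic rationals. *)

theory Defs
  imports "HOL-Analysis.Analysis"
begin

definition padic_rat :: "nat \<Rightarrow> real \<Rightarrow> bool" where
  "padic_rat p r \<longleftrightarrow> (\<exists>a::int. \<exists>k::nat. r = of_int a / (of_nat p) ^ k)"

definition padic_vec :: "nat \<Rightarrow> real ^ 'n \<Rightarrow> bool" where
  "padic_vec p x \<longleftrightarrow> (\<forall>i. padic_rat p (x $ i))"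

definition integral_vec :: "real ^ 'n \<Rightarrow> bool" where
  "integral_vec x \<longleftrightarrow> (\<forall>i. x $ i \<in> \<int>)"

definition integral_mat :: "real ^ 'n ^ 'm \<Rightarrow> bool" where
  "integral_mat A \<longleftrightarrow> (\<forall>i j. A $ i $ j \<in> \<int>)"

definition rational_vec :: "real ^ 'n \<Rightarrow> bool" where
  "rational_vec x \<longleftrightarrow> (\<forall>i. x $ i \<in> \<rat>)"

definition rational_mat :: "real ^ 'n ^ 'm \<Rightarrow> bool" where
  "rational_mat A \<longleftrightarrow> (\<forall>i j. A $ i $ j \<in> \<rat>)"

definition polyhedron_of :: "real ^ 'n ^ 'k \<Rightarrow> real ^ 'k \<Rightarrow> (real ^ 'n) set" where
  "polyhedron_of M d = {x. \<forall>i. (M *v x) $ i \<le> d $ i}"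

end

theory Submission
  imports Defs
begin

lemma padic_int: "padic_rat p (of_int a)"
  unfolding padic_rat_def by (rule exI[of _ a], rule exI[of _ 0]) simp

lemma padic_add:
  assumes "p > 0" "padic_rat p x" "padic_rat p y" shows "padic_rat p (x + y)"
proof -
  obtain a k c l where x: "x = of_int a / real p ^ k" and y: "y = of_int c / real p ^ l"
    using assms unfolding padic_rat_def by blast
  have "x + y = of_int (a * int p ^ l + c * int p ^ k) / real p ^ (k + l)"
    using assms(1) by (simp add: x y field_simps power_add)
  then show ?thesis unfolding padic_rat_def by blast
qed

lemma padic_mult:
  assumes "padic_rat p x" "padic_rat p y" shows "padic_rat p (x * y)"
proof -
  obtain a k c l where x: "x = of_int a / real p ^ k" and y: "y = of_int c / real p ^ l"
    using assms unfolding padic_rat_def by blast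
  have "x * y = of_int (a * c) / real p ^ (k + l)"
    by (simp add: x y power_add)
  then show ?thesis unfolding padic_rat_def by blast
qed

lemma padic_uminus:
  assumes "padic_rat p x" shows "padic_rat p (- x)"
proof -
  obtain a k where x: "x = of_int a / real p ^ k"
    using assms unfolding padic_rat_def by blast
  have "- x = of_int (- a) / real p ^ k" by (simp add: x)
  then show ?thesis unfolding padic_rat_def by blast
qed

lemma padic_Ints: "x \<in> \<int> \<Longrightarrow> padic_rat p x"
  by (metis Ints_cases padic_int)

lemma padic_sum:
  assumes "p > 0" "\<And>i. i \<in> S \<Longrightarrow> padic_rat p (f i)" shows "padic_rat p (sum f S)"
  using assms(2)
proof (induction S rule: infinite_finite_induct)
  case (infinite A) then show ?case using padic_int[of p 0] by simp
next
  case empty then show ?case using padic_int[of p 0] by simp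
next
  case (insert x F) then show ?case using padic_add[OF assms(1)] by simp
qed

lemma not_padic_inv:
  assumes "prime p" shows "\<not> padic_rat p (1 / (real p + 1))"
proof
  assume "padic_rat p (1 / (real p + 1))"
  then obtain a k where h: "1 / (real p + 1) = of_int a / real p ^ k" unfolding padic_rat_def by blast
  have p0: "p > 0" using assms prime_gt_0_nat by blast
  have "real p ^ k = of_int a * (real p + 1)" using h p0
    by (simp add: field_simps)
  then have "int p ^ k = a * (int p + 1)"
    by (metis (mono_tags, opaque_lifting) of_int_eq_iff of_int_add of_int_mult of_int_of_nat_eq of_int_power of_int_1)
  then have d: "(int p + 1) dvd int p ^ k" by simp
  have "coprime (int p + 1) (int p)" by simp
  then have "coprime (int p + 1) (int p ^ k)" using coprime_power_right_iff by blast
  with d have "is_unit (int p + 1)" using coprime_common_divisor dvd_refl by blast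
  then show False using p0 by simp
qed

lemma inner_axis1: "((c::real) *\<^sub>R axis i 1) \<bullet> (v::real^'m) = c * v $ i"
  by (simp add: inner_axis' inner_scaleR_left)

lemma inner_axis1b: "(axis i (1::real)) \<bullet> (v::real^'m) = v $ i"
  by (simp add: inner_axis')

lemma padic_lattice:
  fixes L :: "(real^'m) set" and b :: "real^'m" and I :: "'m set"
  assumes pp: "prime p" and fin: "finite I"
  and "0 \<in> L" and "\<And>v w. v\<in>L \<Longrightarrow> w\<in>L \<Longrightarrow> v + w \<in> L"
  and "\<And>v (c::int). v\<in>L \<Longrightarrow> of_int c *\<^sub>R v \<in> L"
  and "\<And>v. v\<in>L \<Longrightarrow> integral_vec v"
  and "\<And>y. (\<forall>i. i \<notin> I \<longrightarrow> y$i = 0) \<Longrightarrow> (\<forall>v\<in>L. y \<bullet> v \<in> \<int>) \<Longrightarrow> padic_rat p (y \<bullet> b)"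
  shows "\<exists>v\<in>L. \<exists>k::nat. \<forall>i\<in>I. v$i = real p ^ k * b$i"
  using fin assms(3-)
proof (induction I arbitrary: L b rule: finite_induct)
  case empty
  then show ?case by blast
next
  case (insert i F L b)
  have p0: "p > 0" using pp prime_gt_0_nat by blast
  note L0 = insert.prems(1) and Ladd = insert.prems(2) and Lsc = insert.prems(3)
    and Lint = insert.prems(4) and cond = insert.prems(5)
  have Lints: "v $ j \<in> \<int>" if "v \<in> L" for v j
    using Lint[OF that] unfolding integral_vec_def by blast
  show ?case
  proof (cases "\<forall>v\<in>L. v$i = 0")
    case True
    have bi: "b $ i = 0"
    proof (rule ccontr)
      assume nz: "b $ i \<noteq> 0"
      define y where "y = (1 / ((real p + 1) * b$i)) *\<^sub>R (axis i 1 :: real^'m)"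
      have "padic_rat p (y \<bullet> b)"
      proof (rule cond)
        show "\<forall>j. j \<notin> insert i F \<longrightarrow> y $ j = 0" by (simp add: y_def axis_def)
        show "\<forall>v\<in>L. y \<bullet> v \<in> \<int>" using True by (simp add: y_def inner_axis1 inner_axis1b)
      qed
      moreover have "y \<bullet> b = 1 / (real p + 1)" using nz by (simp add: y_def inner_axis1 inner_axis1b)
      ultimately show False using not_padic_inv[OF pp] by simp
    qed
    have "\<exists>v\<in>L. \<exists>k::nat. \<forall>i\<in>F. v$i = real p ^ k * b$i"
      using insert.IH[OF L0 Ladd Lsc Lint] cond by auto
    then show ?thesis using True bi by auto
  next
    case False
    then obtain w where wL: "w \<in> L" and wi: "w $ i \<noteq> 0" by blast
    obtain m where m: "w $ i = of_int m" using Lints[OF wL] Ints_cases by metis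
    have ex: "\<exists>n::nat. n > 0 \<and> (\<exists>v\<in>L. v$i = real n)"
    proof (cases "m > 0")
      case True
      then show ?thesis using wL m by (intro exI[of _ "nat m"]) auto
    next
      case False
      have "of_int (-1) *\<^sub>R w \<in> L" using Lsc[OF wL] .
      moreover have "(of_int (-1) *\<^sub>R w) $ i = real (nat (- m))" using False m wi by simp
      ultimately show ?thesis using False m wi by (intro exI[of _ "nat (-m)"]) (auto intro!: bexI[of _ "of_int (-1) *\<^sub>R w"])
    qed
    define g where "g = (LEAST n::nat. n > 0 \<and> (\<exists>v\<in>L. v$i = real n))"
    have g: "g > 0 \<and> (\<exists>v\<in>L. v$i = real g)"
      unfolding g_def using LeastI_ex[OF ex] .
    then obtain w0 where w0L: "w0 \<in> L" and w0i: "w0 $ i = real g" and gpos: "g > 0" by blast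
    have gmin: "\<not> (n > 0 \<and> (\<exists>v\<in>L. v$i = real n))" if "n < g" for n
      using not_less_Least[of n "\<lambda>n. n > 0 \<and> (\<exists>v\<in>L. v$i = real n)"] that unfolding g_def by blast
    have mult: "\<exists>q::int. v$i = of_int q * real g" if vL: "v \<in> L" for v
    proof -
      obtain mv where mv: "v $ i = of_int mv" using Lints[OF vL] Ints_cases by metis
      define q where "q = mv div int g"
      define r where "r = mv mod int g"
      have mqr: "mv = q * int g + r" unfolding q_def r_def by simp
      have r0: "0 \<le> r" "r < int g" unfolding r_def using gpos by simp_all
      define u where "u = v + of_int (- q) *\<^sub>R w0"
      have uL: "u \<in> L" unfolding u_def using Ladd[OF vL Lsc[OF w0L]] .
      have ui: "u $ i = of_int r" unfolding u_def using mv w0i mqr by simp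
      have "r = 0"
      proof (rule ccontr)
        assume "r \<noteq> 0"
        then have "nat r > 0" "nat r < g" using r0 by auto
        moreover have "u $ i = real (nat r)" using ui r0 by simp
        ultimately show False using gmin uL by blast
      qed
      then show ?thesis using mv mqr by (intro exI[of _ q]) simp
    qed
    define L0 where "L0 = {v\<in>L. v$i = 0}"
    define b' where "b' = b - (b$i / real g) *\<^sub>R w0"
    have IH: "\<exists>v\<in>L0. \<exists>k::nat. \<forall>j\<in>F. v$j = real p ^ k * b'$j"
    proof (rule insert.IH)
      show "0 \<in> L0" using L0 by (simp add: L0_def)
      show "v + w \<in> L0" if "v \<in> L0" "w \<in> L0" for v w using that Ladd by (simp add: L0_def)
      show "of_int c *\<^sub>R v \<in> L0" if "v \<in> L0" for v c using that Lsc by (simp add: L0_def)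
      show "integral_vec v" if "v \<in> L0" for v using that Lint by (simp add: L0_def)
      fix y :: "real^'m"
      assume ysup: "\<forall>j. j \<notin> F \<longrightarrow> y $ j = 0" and yint: "\<forall>v\<in>L0. y \<bullet> v \<in> \<int>"
      define s where "s = - (y \<bullet> w0) / real g"
      define y2 where "y2 = y + s *\<^sub>R axis i 1"
      have "padic_rat p (y2 \<bullet> b)"
      proof (rule cond)
        show "\<forall>j. j \<notin> insert i F \<longrightarrow> y2 $ j = 0" using ysup by (simp add: y2_def axis_def)
        show "\<forall>v\<in>L. y2 \<bullet> v \<in> \<int>"
        proof
          fix v assume vL: "v \<in> L"
          obtain q where q: "v$i = of_int q * real g" using mult[OF vL] by blast
          define v0 where "v0 = v + of_int (- q) *\<^sub>R w0"
          have v0L': "v0 \<in> L" unfolding v0_def using Ladd[OF vL Lsc[OF w0L]] by blast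
          have v0L: "v0 \<in> L0" unfolding L0_def using v0L' q w0i by (simp add: v0_def)
          have e1: "y2 \<bullet> v = y \<bullet> v + s * v$i"
            unfolding y2_def by (simp only: inner_add_left inner_axis1)
          have e2: "y \<bullet> v0 = y \<bullet> v + of_int (-q) * (y \<bullet> w0)"
            unfolding v0_def by (simp only: inner_add_right inner_scaleR_right)
          have "y2 \<bullet> v = y \<bullet> v0"
            using gpos q unfolding e1 e2 s_def by (simp add: field_simps)
          then show "y2 \<bullet> v \<in> \<int>" using yint v0L by simp
        qed
      qed
      moreover have "y2 \<bullet> b = y \<bullet> b'"
      proof -
        have e1: "y2 \<bullet> b = y \<bullet> b + s * b$i"
          unfolding y2_def by (simp only: inner_add_left inner_axis1)
        have e2: "y \<bullet> b' = y \<bullet> b - (b$i / real g) * (y \<bullet> w0)"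
          unfolding b'_def by (simp only: inner_diff_right inner_scaleR_right)
        show ?thesis unfolding e1 e2 s_def by (simp add: field_simps)
      qed
      ultimately show "padic_rat p (y \<bullet> b')" by simp
    qed
    then obtain v0 k where v0L: "v0 \<in> L0" and v0F: "\<forall>j\<in>F. v0$j = real p ^ k * b'$j" by blast
    have "padic_rat p (((1 / real g) *\<^sub>R axis i 1) \<bullet> b)"
    proof (rule cond)
      show "\<forall>j. j \<notin> insert i F \<longrightarrow> ((1 / real g) *\<^sub>R axis i 1 :: real^'m) $ j = 0" by (simp add: axis_def)
      show "\<forall>v\<in>L. ((1 / real g) *\<^sub>R axis i 1) \<bullet> v \<in> \<int>"
        using mult gpos by (force simp: inner_axis1 inner_axis1b)
    qed
    then obtain a l where al: "b $ i / real g = of_int a / real p ^ l"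
      unfolding padic_rat_def by (auto simp: inner_axis1 inner_axis1b)
    have al2: "of_int a = real p ^ l * b $ i / real g" using al p0 by (simp add: field_simps)
    define v where "v = of_int (int p ^ l) *\<^sub>R v0 + of_int (int p ^ k * a) *\<^sub>R w0"
    have vL: "v \<in> L" unfolding v_def
      by (rule Ladd; rule Lsc) (use v0L w0L L0_def in auto)
    have "\<forall>j\<in>insert i F. v$j = real p ^ (k + l) * b$j"
    proof
      fix j assume j: "j \<in> insert i F"
      show "v$j = real p ^ (k + l) * b$j"
      proof (cases "j = i")
        case True
        then show ?thesis using v0L gpos unfolding v_def L0_def
          by (simp add: al2 w0i power_add)
      next
        case False
        then have "j \<in> F" using j by simp
        then have h: "v0$j = real p^k * (b$j - b$i/real g * w0$j)" using v0F by (simp add: b'_def)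
        show ?thesis using gpos unfolding v_def by (simp add: h al2 power_add field_simps)
      qed
    qed
    then show ?thesis using vL by blast
  qed
qed


lemma int_inner: "integral_vec (u::real^'n) \<Longrightarrow> integral_vec v \<Longrightarrow> u \<bullet> v \<in> \<int>"
  unfolding integral_vec_def inner_vec_def by (auto intro!: Ints_sum Ints_mult)

lemma int_row: "integral_mat A \<Longrightarrow> integral_vec (A $ i)"
  unfolding integral_mat_def integral_vec_def by blast

lemma int_vec_lin: "integral_vec u \<Longrightarrow> integral_vec v \<Longrightarrow> a \<in> \<int> \<Longrightarrow> c \<in> \<int> \<Longrightarrow>
   integral_vec (a *\<^sub>R u - c *\<^sub>R (v::real^'n))"
  unfolding integral_vec_def by (auto intro!: Ints_diff Ints_mult)

lemma int_kernel_span: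
  fixes A :: "real^'n^'m"
  assumes Ai: "integral_mat A" and fin: "finite I"
  shows "(\<forall>i\<in>I. A$i \<bullet> z = 0) \<Longrightarrow> z \<in> span {k. integral_vec k \<and> (\<forall>i\<in>I. A$i \<bullet> k = 0)}"
  using fin
proof (induction I arbitrary: z rule: finite_induct)
  case empty
  have "Basis \<subseteq> {k::real^'n. integral_vec k}"
    by (auto simp: Basis_vec_def integral_vec_def axis_def)
  then have "span (Basis::(real^'n) set) \<subseteq> span {k. integral_vec k}" by (rule span_mono)
  then show ?case by auto
next
  case (insert a F z)
  define S' where "S' = {k. integral_vec k \<and> (\<forall>i\<in>F. A$i \<bullet> k = 0)}"
  define S where "S = {k. integral_vec k \<and> (\<forall>i\<in>insert a F. A$i \<bullet> k = 0)}"
  have zS': "z \<in> span S'" unfolding S'_def using insert by auto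
  show ?case
  proof (cases "\<forall>k\<in>S'. A$a \<bullet> k = 0")
    case True
    then have "S' = S" unfolding S_def S'_def by auto
    then show ?thesis using zS' unfolding S_def by simp
  next
    case False
    then obtain k0 where k0: "k0 \<in> S'" and c0: "A$a \<bullet> k0 \<noteq> 0" by blast
    define c0 where "c0 = A$a \<bullet> k0"
    have c0nz: "c0 \<noteq> 0" using c0 c0_def by simp
    have c0i: "c0 \<in> \<int>" unfolding c0_def using int_inner int_row[OF Ai] k0 S'_def by blast
    have "S' \<subseteq> span (insert k0 S)"
    proof
      fix k assume k: "k \<in> S'"
      define c where "c = A$a \<bullet> k"
      have ci: "c \<in> \<int>" unfolding c_def using int_inner int_row[OF Ai] k S'_def by blast
      define u where "u = c0 *\<^sub>R k - c *\<^sub>R k0"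
      have "u \<in> S"
        unfolding S_def u_def using k k0 c0i ci int_vec_lin
        by (auto simp: S'_def inner_diff_right c_def c0_def)
      then have "u \<in> span (insert k0 S)" by (simp add: span_base)
      moreover have "k0 \<in> span (insert k0 S)" by (simp add: span_base)
      ultimately have "(1 / c0) *\<^sub>R u + (c / c0) *\<^sub>R k0 \<in> span (insert k0 S)"
        by (intro span_add span_scale)
      moreover have "(1 / c0) *\<^sub>R u + (c / c0) *\<^sub>R k0 = k"
        using c0nz unfolding u_def by (simp add: algebra_simps)
      ultimately show "k \<in> span (insert k0 S)" by simp
    qed
    then have "span S' \<subseteq> span (insert k0 S)" by (metis span_mono span_span)
    with zS' have "z \<in> span (insert k0 S)" by blast
    then obtain \<mu> where mu: "z - \<mu> *\<^sub>R k0 \<in> span S" unfolding span_insert by blast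
    have "span S \<subseteq> {x. A$a \<bullet> x = 0}"
      by (rule span_minimal) (auto simp: S_def subspace_hyperplane)
    with mu have "A$a \<bullet> (z - \<mu> *\<^sub>R k0) = 0" by blast
    then have "\<mu> * c0 = 0" using insert.prems by (simp add: inner_diff_right c0_def)
    then have "\<mu> = 0" using c0nz by simp
    then show ?thesis using mu unfolding S_def by simp
  qed
qed

lemma padic_dense:
  assumes p1: "p > 1" and e: "e > 0"
  shows "\<exists>r. padic_rat p r \<and> \<bar>c - r\<bar> < e"
proof -
  obtain k where k: "1 / e < real p ^ k" using real_arch_pow[of "real p" "1/e"] p1 by auto
  have pk: "real p ^ k > 0" using p1 by simp
  define r where "r = of_int \<lfloor>c * real p ^ k\<rfloor> / real p ^ k"
  have "padic_rat p r" unfolding r_def padic_rat_def by blast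
  moreover have "\<bar>c - r\<bar> < e"
  proof -
    have "c - r = (c * real p ^ k - of_int \<lfloor>c * real p ^ k\<rfloor>) / real p ^ k"
      unfolding r_def using pk by (simp add: field_simps)
    moreover have "0 \<le> c * real p ^ k - of_int \<lfloor>c * real p ^ k\<rfloor>"
      "c * real p ^ k - of_int \<lfloor>c * real p ^ k\<rfloor> < 1"
      by linarith+
    ultimately have "0 \<le> c - r" "c - r < 1 / real p ^ k" using pk
      by (simp_all add: divide_strict_right_mono)
    moreover have "1 / real p ^ k < e" using k e pk
      by (simp add: field_simps)
    ultimately show ?thesis by simp
  qed
  ultimately show ?thesis by blast
qed

lemma padic_vec_add: "p > 0 \<Longrightarrow> padic_vec p x \<Longrightarrow> padic_vec p y \<Longrightarrow> padic_vec p (x + y)"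
  unfolding padic_vec_def using padic_add by simp

lemma padic_vec_scale: "padic_rat p r \<Longrightarrow> padic_vec p x \<Longrightarrow> padic_vec p (r *\<^sub>R x)"
  unfolding padic_vec_def using padic_mult by simp

lemma int_padic_vec: "integral_vec x \<Longrightarrow> padic_vec p x"
  unfolding padic_vec_def integral_vec_def using padic_Ints by blast

lemma padic_kernel_dense:
  fixes A :: "real^'n^'m"
  assumes p1: "p > 1" and Ai: "integral_mat A" and z: "A *v z = 0" and e: "e > 0"
  shows "\<exists>k. padic_vec p k \<and> A *v k = 0 \<and> norm (z - k) < e"
proof -
  define K where "K = {k. padic_vec p k \<and> A *v k = 0}"
  define P where "P = {z. \<forall>e>0. \<exists>k\<in>K. norm (z - k) < e}"
  have p0: "p > 0" using p1 by simp
  have sub: "subspace P"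
  proof (rule subspaceI)
    have "0 \<in> K" unfolding K_def padic_vec_def using padic_int[of p 0] by simp
    then show "0 \<in> P" unfolding P_def by force
  next
    fix x y assume x: "x \<in> P" and y: "y \<in> P"
    show "x + y \<in> P" unfolding P_def
    proof (intro CollectI allI impI)
      fix e :: real assume "e > 0"
      then have e2: "e/2 > 0" by simp
      obtain k where k: "k \<in> K" "norm (x - k) < e/2" using x e2 unfolding P_def by blast
      obtain l where l: "l \<in> K" "norm (y - l) < e/2" using y e2 unfolding P_def by blast
      have "k + l \<in> K" using k l p0 padic_vec_add unfolding K_def by (auto simp: matrix_vector_right_distrib)
      moreover have "norm (x + y - (k + l)) < e"
        using k l norm_triangle_lt[of "x - k" "y - l" e] by (simp add: algebra_simps)
      ultimately show "\<exists>k\<in>K. norm (x + y - k) < e" by blast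
    qed
  next
    fix c :: real and x assume x: "x \<in> P"
    show "c *\<^sub>R x \<in> P" unfolding P_def
    proof (intro CollectI allI impI)
      fix e :: real assume e: "e > 0"
      define d where "d = min 1 (e / (\<bar>c\<bar> + norm x + 2))"
      have pos: "\<bar>c\<bar> + norm x + 2 > 0" using norm_ge_zero[of x] abs_ge_zero[of c] by linarith
      have d0: "d > 0" unfolding d_def using e pos by simp
      have d1: "d \<le> 1" unfolding d_def by simp
      have de: "d * (\<bar>c\<bar> + norm x + 2) \<le> e"
      proof -
        have "d \<le> e / (\<bar>c\<bar> + norm x + 2)" unfolding d_def by simp
        with pos show ?thesis by (simp add: field_simps)
      qed
      obtain k where k: "k \<in> K" "norm (x - k) < d" using x d0 unfolding P_def by blast
      obtain r where r: "padic_rat p r" "\<bar>c - r\<bar> < d" using padic_dense[OF p1 d0] by blast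
      have "r *\<^sub>R k \<in> K" using k r padic_vec_scale unfolding K_def by (auto simp: matrix_vector_mult_scaleR)
      moreover have "norm (c *\<^sub>R x - r *\<^sub>R k) < e"
      proof -
        have eq: "c *\<^sub>R x - r *\<^sub>R k = c *\<^sub>R (x - k) + (c - r) *\<^sub>R k" by (simp add: algebra_simps)
        have nk: "norm k \<le> norm x + 1"
          using k d1 norm_triangle_ineq2[of k x] by (simp add: norm_minus_commute)
        have "norm (c *\<^sub>R x - r *\<^sub>R k) \<le> \<bar>c\<bar> * norm (x - k) + \<bar>c - r\<bar> * norm k"
          unfolding eq using norm_triangle_ineq[of "c *\<^sub>R (x - k)" "(c - r) *\<^sub>R k"] by simp
        also have "\<dots> \<le> \<bar>c\<bar> * d + d * (norm x + 1)"
          using k r nk by (intro add_mono mult_mono) auto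
        also have "\<dots> < d * (\<bar>c\<bar> + norm x + 2)" using d0 by (simp add: algebra_simps)
        finally show ?thesis using de by simp
      qed
      ultimately show "\<exists>k\<in>K. norm (c *\<^sub>R x - k) < e" by blast
    qed
  qed
  have "{k. integral_vec k \<and> (\<forall>i\<in>UNIV. A$i \<bullet> k = 0)} \<subseteq> P"
  proof
    fix k assume k: "k \<in> {k. integral_vec k \<and> (\<forall>i\<in>UNIV. A$i \<bullet> k = 0)}"
    have "A *v k = 0" using k by (simp add: vec_eq_iff matrix_vector_mul_component)
    then have "k \<in> K" using k int_padic_vec unfolding K_def by blast
    then show "k \<in> P" unfolding P_def by force
  qed
  then have "span {k. integral_vec k \<and> (\<forall>i\<in>UNIV. A$i \<bullet> k = 0)} \<subseteq> P"
    using sub by (rule span_minimal)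
  moreover have "z \<in> span {k. integral_vec k \<and> (\<forall>i\<in>UNIV. A$i \<bullet> k = 0)}"
    using int_kernel_span[OF Ai, of UNIV z] z by (simp add: vec_eq_iff matrix_vector_mul_component)
  ultimately have "z \<in> P" by blast
  then show ?thesis using e unfolding P_def K_def by blast
qed


lemma convex_polyhedron_of: "convex (polyhedron_of M d)"
proof -
  have "polyhedron_of M d = (\<Inter>i\<in>UNIV. {x. inner (M$i) x \<le> d$i})"
    unfolding polyhedron_of_def by (auto simp: matrix_vector_mul_component)
  then show ?thesis by (simp add: convex_INT convex_halfspace_le)
qed

theorem corollary2p6:
  fixes M :: "real ^ 'n ^ 'k" and d :: "real ^ 'k"
    and A :: "real ^ 'n ^ 'm" and b :: "real ^ 'm"
  assumes "rational_mat M" and "rational_vec d"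
    and "polyhedron_of M d \<noteq> {}"
    and "integral_mat A" and "integral_vec b"
    and "affine hull (polyhedron_of M d) = {x. A *v x = b}"
    and "prime p"
  shows "(\<exists>x \<in> polyhedron_of M d. padic_vec p x) \<longleftrightarrow>
         \<not> (\<exists>y :: real ^ 'm. integral_vec (y v* A) \<and> \<not> padic_rat p (y \<bullet> b))"
proof -
  define P where "P = polyhedron_of M d"
  have pp: "prime p" by fact
  have p1: "p > 1" using pp prime_gt_1_nat by blast
  have p0: "p > 0" using p1 by simp
  have Ai: "integral_mat A" by fact
  have aff: "affine hull P = {x. A *v x = b}" using assms(6) P_def by simp
  show ?thesis
  proof
    assume "\<exists>x \<in> polyhedron_of M d. padic_vec p x"
    then obtain x where xP: "x \<in> P" and xp: "padic_vec p x" unfolding P_def by blast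
    have Ax: "A *v x = b" using hull_inc[OF xP, of affine] aff by blast
    show "\<not> (\<exists>y :: real ^ 'm. integral_vec (y v* A) \<and> \<not> padic_rat p (y \<bullet> b))"
    proof
      assume "\<exists>y :: real ^ 'm. integral_vec (y v* A) \<and> \<not> padic_rat p (y \<bullet> b)"
      then obtain y :: "real^'m" where yi: "integral_vec (y v* A)" and yn: "\<not> padic_rat p (y \<bullet> b)" by blast
      have "y \<bullet> b = (y v* A) \<bullet> x" using Ax by (simp add: dot_lmul_matrix)
      also have "\<dots> = (\<Sum>j\<in>UNIV. (y v* A)$j * x$j)" by (simp add: inner_vec_def)
      also have "padic_rat p \<dots>"
      proof (rule padic_sum[OF p0])
        fix j
        have "(y v* A)$j \<in> \<int>" using yi unfolding integral_vec_def by blast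
        then show "padic_rat p ((y v* A)$j * x$j)"
          using padic_mult[OF padic_Ints] xp unfolding padic_vec_def by blast
      qed
      finally have "padic_rat p (y \<bullet> b)" .
      with yn show False by simp
    qed
  next
    assume "\<not> (\<exists>y :: real ^ 'm. integral_vec (y v* A) \<and> \<not> padic_rat p (y \<bullet> b))"
    then have H: "\<And>y. integral_vec (y v* A) \<Longrightarrow> padic_rat p (y \<bullet> b)" by blast
    define L where "L = {A *v z | z. integral_vec z}"
    have "\<exists>v\<in>L. \<exists>k::nat. \<forall>i\<in>UNIV. v$i = real p ^ k * b$i"
    proof (rule padic_lattice[OF pp])
      show "finite (UNIV :: 'm set)" by simp
      show "0 \<in> L" unfolding L_def integral_vec_def by (auto intro!: exI[of _ 0])
      show "v + w \<in> L" if vwL: "v \<in> L" "w \<in> L" for v w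
      proof -
        obtain z1 z2 where "v = A *v z1" "integral_vec z1" "w = A *v z2" "integral_vec z2"
          using vwL unfolding L_def by blast
        then show ?thesis unfolding L_def
          by (intro CollectI exI[of _ "z1 + z2"]) (auto simp: matrix_vector_right_distrib integral_vec_def)
      qed
      show "of_int c *\<^sub>R v \<in> L" if vL: "v \<in> L" for v c
      proof -
        obtain z1 where "v = A *v z1" "integral_vec z1"
          using vL unfolding L_def by blast
        then show ?thesis unfolding L_def
          by (intro CollectI exI[of _ "of_int c *\<^sub>R z1"]) (auto simp: matrix_vector_mult_scaleR integral_vec_def)
      qed
      show "integral_vec v" if vL: "v \<in> L" for v
      proof -
        obtain z1 where "v = A *v z1" "integral_vec z1"
          using vL unfolding L_def by blast
        then show ?thesis using int_inner[OF int_row[OF Ai]]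
          unfolding integral_vec_def[of v] by (simp add: matrix_vector_mul_component)
      qed
      fix y :: "real^'m"
      assume "\<forall>i. i \<notin> UNIV \<longrightarrow> y$i = 0" and yL: "\<forall>v\<in>L. y \<bullet> v \<in> \<int>"
      have "y \<bullet> (A *v axis j 1) \<in> \<int>" for j
      proof -
        have "integral_vec (axis j (1::real) :: real^'n)" by (simp add: integral_vec_def axis_def)
        then have "A *v axis j 1 \<in> L" unfolding L_def by blast
        then show ?thesis using yL by blast
      qed
      then have "integral_vec (y v* A)"
        unfolding integral_vec_def cart_eq_inner_axis[of "y v* A"] dot_lmul_matrix by blast
      then show "padic_rat p (y \<bullet> b)" by (rule H)
    qed
    then obtain z k where zi: "integral_vec z" and zk: "\<forall>i. (A *v z)$i = real p ^ k * b$i"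
      unfolding L_def by auto
    define x0 where "x0 = (1 / real p ^ k) *\<^sub>R z"
    have Ax0: "A *v x0 = b" unfolding x0_def using zk p0
      by (simp add: matrix_vector_mult_scaleR vec_eq_iff)
    have px0: "padic_vec p x0" unfolding x0_def
    proof (rule padic_vec_scale)
      show "padic_rat p (1 / real p ^ k)" unfolding padic_rat_def
        by (rule exI[of _ 1], rule exI[of _ k]) simp
      show "padic_vec p z" using zi by (rule int_padic_vec)
    qed
    have "rel_interior P \<noteq> {}"
      using rel_interior_eq_empty[of P] convex_polyhedron_of[of M d] assms(3) unfolding P_def by blast
    then obtain x1 where "x1 \<in> rel_interior P" by blast
    then obtain e where x1P: "x1 \<in> P" and e: "e > 0" and ball: "ball x1 e \<inter> affine hull P \<subseteq> P"
      unfolding mem_rel_interior_ball by blast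
    have Ax1: "A *v x1 = b" using hull_inc[OF x1P, of affine] aff by blast
    have "A *v (x1 - x0) = 0" using Ax1 Ax0 by (simp add: matrix_vector_mult_diff_distrib)
    then obtain k where pk: "padic_vec p k" and Ak: "A *v k = 0" and nk: "norm (x1 - x0 - k) < e"
      using padic_kernel_dense[OF p1 Ai _ e] by blast
    define x where "x = x0 + k"
    have "x \<in> affine hull P" unfolding aff x_def using Ax0 Ak by (simp add: matrix_vector_right_distrib)
    moreover have "x \<in> ball x1 e" unfolding x_def mem_ball dist_norm using nk by (simp add: algebra_simps)
    ultimately have "x \<in> P" using ball by blast
    moreover have "padic_vec p x" unfolding x_def using padic_vec_add[OF p0 px0 pk] .
    ultimately show "\<exists>x \<in> polyhedron_of M d. padic_vec p x" unfolding P_def by blast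
  qed
qed

end
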